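(* Let $1<\beta\le2$. There is a set $\mathcal F\subset[0,1]$ of full Lebesgue measure such that for every $x\in\mathcal F$ and every $\alpha\in(0,1)$, the function $G_\beta$ is pointwise $\alpha$-Hölder continuous at $x$; that is, there exists a constant $C=C(x,\alpha)>0$ with $|G_\beta(y)-G_\beta(x)|\le C|y-x|^\alpha$ for all $y\in(0,1)$.
   Context: Fix $1<\beta\le 2$. The beta-map is $\tau_\beta:[0,1]\to[0,1]$, $\tau_\beta(x)=\beta x-[\beta x]$, where $[y]$ is the integer part of $y$. Let $m_\beta$ be the unique $\tau_\beta$-invariant Borel probability measure absolutely continuous with respect to Lebesgue measure. For $x\in[0,1]$ and $n\ge1$ the digits are $g_n(x)=[\beta\,\tau_\beta^{n-1}(x)]$, so that $x=\sum_{n\ge1}g_n(x)\beta^{-n}$ (greedy $\beta$-expansion). Put $M_\beta=m_\beta([1/\beta,1])=\int_0^1 g_1\,dm_\beta$. The generalized Takagi function is \[ G_\beta(x)=\frac{g_1(x)}{\beta}+\sum_{n=2}^\infty\frac{g_n(x)}{\beta^n}\Bigl(n-\frac{1}{M_\beta}\sum_{i=1}^{n-1}g_i(x)\Bigr),\qquad x\in[0,1]. \] *)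

theory Defs
  imports "HOL-Probability.Probability"
begin

definition beta_map :: "real \<Rightarrow> real \<Rightarrow> real" where
  "beta_map \<beta> x = \<beta> * x - of_int \<lfloor>\<beta> * x\<rfloor>"

definition beta_digit :: "real \<Rightarrow> nat \<Rightarrow> real \<Rightarrow> real" where
  "beta_digit \<beta> n x = of_int \<lfloor>\<beta> * ((beta_map \<beta> ^^ (n - 1)) x)\<rfloor>"

definition is_beta_acim :: "real \<Rightarrow> real measure \<Rightarrow> bool" where
  "is_beta_acim \<beta> M \<longleftrightarrow>
     prob_space M \<and> space M = {0..1} \<and>
     sets M = sets (restrict_space borel {0..1::real}) \<and>
     absolutely_continuous (restrict_space lborel {0..1::real}) M \<and>
     beta_map \<beta> \<in> measurable M M \<and> distr M M (beta_map \<beta>) = M"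

definition beta_acim :: "real \<Rightarrow> real measure" where
  "beta_acim \<beta> = (THE M. is_beta_acim \<beta> M)"

definition M_beta :: "real \<Rightarrow> real" where
  "M_beta \<beta> = measure (beta_acim \<beta>) {1/\<beta>..1}"

definition G_beta :: "real \<Rightarrow> real \<Rightarrow> real" where
  "G_beta \<beta> x = beta_digit \<beta> 1 x / \<beta> +
     (\<Sum>k. let n = k + 2 in
        beta_digit \<beta> n x / \<beta> ^ n *
          (real n - (1 / M_beta \<beta>) * (\<Sum>i=1..n-1. beta_digit \<beta> i x)))"

end

theory Submission
  imports Defs
begin


definition dint :: "real \<Rightarrow> real" where
  "dint u = min (u - of_int \<lfloor>u\<rfloor>) (of_int \<lfloor>u\<rfloor> + 1 - u)"

lemma dint_floor_eq:
  assumes "\<bar>v - u\<bar> < dint u"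
  shows "\<lfloor>v\<rfloor> = \<lfloor>u\<rfloor>"
  using assms unfolding dint_def by (simp add: floor_eq_iff abs_less_iff)

lemma dint_nonneg: "dint u \<ge> 0"
  unfolding dint_def using of_int_floor_le[of u] real_of_int_floor_add_one_gt[of u] by linarith

lemma dint_le1: "dint u \<le> 1"
  unfolding dint_def by linarith

lemma beta_map_range:
  assumes "0 < b"
  shows "0 \<le> beta_map b x \<and> beta_map b x < 1"
  unfolding beta_map_def by linarith

lemma iter_range:
  assumes "0 < b" "0 \<le> x" "x \<le> 1"
  shows "0 \<le> (beta_map b ^^ n) x \<and> (beta_map b ^^ n) x \<le> 1"
proof (cases n)
  case 0 then show ?thesis using assms by simp
next
  case (Suc m)
  then show ?thesis using beta_map_range[OF assms(1), of "(beta_map b ^^ m) x"] by simp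
qed

lemma orbit_shadow:
  assumes "\<forall>j<n. b ^ (j+1) * \<bar>y - x\<bar> < dint (b * (beta_map b ^^ j) x)" and "0 < b"
  shows "(beta_map b ^^ n) y - (beta_map b ^^ n) x = b ^ n * (y - x) \<and>
         (\<forall>j<n. \<lfloor>b * (beta_map b ^^ j) y\<rfloor> = \<lfloor>b * (beta_map b ^^ j) x\<rfloor>)"
  using assms(1)
proof (induction n)
  case 0 then show ?case by simp
next
  case (Suc n)
  then have IH: "(beta_map b ^^ n) y - (beta_map b ^^ n) x = b ^ n * (y - x)"
     and IH2: "\<forall>j<n. \<lfloor>b * (beta_map b ^^ j) y\<rfloor> = \<lfloor>b * (beta_map b ^^ j) x\<rfloor>" by auto
  have c: "b ^ (n+1) * \<bar>y - x\<bar> < dint (b * (beta_map b ^^ n) x)" using Suc.prems by auto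
  have "\<bar>b * (beta_map b ^^ n) y - b * (beta_map b ^^ n) x\<bar> = b ^ (n+1) * \<bar>y - x\<bar>"
    using IH assms(2) by (simp add: right_diff_distrib[symmetric] abs_mult)
  with c have fl: "\<lfloor>b * (beta_map b ^^ n) y\<rfloor> = \<lfloor>b * (beta_map b ^^ n) x\<rfloor>"
    by (intro dint_floor_eq) simp
  have "(beta_map b ^^ Suc n) y - (beta_map b ^^ Suc n) x = b * ((beta_map b ^^ n) y - (beta_map b ^^ n) x)"
    using fl by (simp add: beta_map_def algebra_simps)
  also have "\<dots> = b ^ Suc n * (y - x)" using IH by simp
  finally show ?case using IH2 fl less_Suc_eq by auto
qed

lemma digit_bounds:
  assumes "1 < b" "b \<le> 2" "0 \<le> x" "x \<le> 1"
  shows "0 \<le> beta_digit b k x \<and> beta_digit b k x \<le> 2"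
proof -
  have r: "0 \<le> (beta_map b ^^ (k-1)) x \<and> (beta_map b ^^ (k-1)) x \<le> 1"
    using iter_range[of b x "k-1"] assms by auto
  then have "0 \<le> b * (beta_map b ^^ (k-1)) x" "b * (beta_map b ^^ (k-1)) x \<le> 2"
    using assms by (auto intro: mult_le_one order_trans[OF mult_left_le])
  then have "0 \<le> \<lfloor>b * (beta_map b ^^ (k-1)) x\<rfloor>" "\<lfloor>b * (beta_map b ^^ (k-1)) x\<rfloor> \<le> 2"
    by (simp_all add: floor_le_iff)
  then show ?thesis unfolding beta_digit_def by simp
qed



lemma poly_geom_bounded:
  fixes q :: real
  assumes "0 < q" "q < 1"
  shows "\<exists>B. \<forall>m. (real m + 1) ^ k * q ^ m \<le> B"
proof (cases "k = 0")
  case True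
  then show ?thesis using assms by (intro exI[of _ 1]) (auto intro: power_le_one)
next
  case False
  define r where "r = root k q"
  have r0: "0 < r" and r1: "r < 1" using assms False by (auto simp: r_def)
  have rk: "r ^ k = q" using assms False by (simp add: r_def)
  have "(\<lambda>m. real m * r ^ m) \<longlonglongrightarrow> 0"
    using powser_times_n_limit_0[of r] r0 r1 by simp
  moreover have "(\<lambda>m. r ^ m) \<longlonglongrightarrow> 0" using r0 r1 by (intro LIMSEQ_power_zero) auto
  ultimately have "(\<lambda>m. real m * r ^ m + r ^ m) \<longlonglongrightarrow> 0 + 0" by (rule tendsto_add)
  then have "(\<lambda>m. real m * r ^ m + r ^ m) \<longlonglongrightarrow> 0" by simp
  then have "(\<lambda>m. (real m * r ^ m + r ^ m) ^ k) \<longlonglongrightarrow> 0 ^ k" by (rule tendsto_power)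
  then have "Bseq (\<lambda>m. (real m * r ^ m + r ^ m) ^ k)" by (intro convergent_imp_Bseq convergentI)
  then obtain K where K: "\<forall>m. norm ((real m * r ^ m + r ^ m) ^ k) \<le> K" using BseqD by blast
  have "(real m + 1) ^ k * q ^ m \<le> K" for m
  proof -
    have e1: "real m * r ^ m + r ^ m = (real m + 1) * r ^ m" by (simp add: algebra_simps)
    have e2: "(r ^ m) ^ k = q ^ m" by (metis rk power_mult mult.commute)
    have "(real m + 1) ^ k * q ^ m = (real m * r ^ m + r ^ m) ^ k"
      by (simp only: e1 power_mult_distrib e2)
    also have "\<dots> \<le> K"
    proof -
      have "norm ((real m * r ^ m + r ^ m) ^ k) \<le> K" using K by blast
      then show ?thesis by (simp add: abs_le_iff)
    qed
    finally show ?thesis .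
  qed
  then show ?thesis by blast
qed

lemma poly_geom_summable:
  fixes q :: real
  assumes "0 < q" "q < 1"
  shows "summable (\<lambda>m. (real m + 1) ^ k * q ^ m)"
proof -
  define s where "s = sqrt q"
  have s0: "0 < s" and s1: "s < 1" using assms by (auto simp: s_def)
  obtain B where B: "\<And>m. (real m + 1) ^ k * s ^ m \<le> B" using poly_geom_bounded[OF s0 s1] by blast
  have nb: "norm ((real m + 1) ^ k * q ^ m) \<le> B * s ^ m" for m
  proof -
    have "s * s = q" using assms by (simp add: s_def)
    then have "q ^ m = s ^ m * s ^ m" by (metis power_mult_distrib)
    then have "norm ((real m + 1) ^ k * q ^ m) = ((real m + 1) ^ k * s ^ m) * s ^ m"
      using assms by (simp add: abs_mult)
    also have "\<dots> \<le> B * s ^ m" using B[of m] s0 by (intro mult_right_mono) auto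
    finally show ?thesis .
  qed
  have sB: "summable (\<lambda>m. B * s ^ m)" using s0 s1 by (intro summable_mult summable_geometric) auto
  show ?thesis by (rule summable_comparison_test'[OF sB nb])
qed

lemma tail_bound:
  fixes d :: "nat \<Rightarrow> real" and q K :: real
  assumes q: "0 < q" "q < 1" and K: "0 \<le> K"
    and bd: "\<And>m. \<bar>d m\<bar> \<le> K * real m * q ^ m" and z: "\<And>m. m \<le> n \<Longrightarrow> d m = 0"
  shows "summable d \<and> \<bar>suminf d\<bar> \<le> K * (real n + 1) * q ^ (n + 1) * (\<Sum>j. (real j + 1) * q ^ j)"
proof -
  have sq: "summable (\<lambda>m. (real m + 1) ^ 1 * q ^ m)" by (rule poly_geom_summable[OF q])
  have sg: "summable (\<lambda>m. K * ((real m + 1) * q ^ m))" using sq by (intro summable_mult) simp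
  have "summable d"
  proof (rule summable_comparison_test')
    show "norm (d m) \<le> K * ((real m + 1) * q ^ m)" for m
    proof -
      have "real m * q ^ m \<le> (real m + 1) * q ^ m" using q by (intro mult_right_mono) auto
      then have "K * (real m * q ^ m) \<le> K * ((real m + 1) * q ^ m)" using K by (rule mult_left_mono)
      then show ?thesis using bd[of m] by (simp add: mult.assoc)
    qed
  qed (rule sg)
  define g where "g j = K * (real n + 1) * q ^ (n + 1) * ((real j + 1) * q ^ j)" for j
  have sgg: "summable g" unfolding g_def using sq by (intro summable_mult) simp
  have sd': "summable (\<lambda>j. d (j + Suc n))" using \<open>summable d\<close> by (rule summable_ignore_initial_segment)
  have eq: "suminf d = (\<Sum>j. d (j + Suc n))"
    using suminf_split_initial_segment[OF \<open>summable d\<close>, of "Suc n"] z by simp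
  have gb: "\<bar>d (j + Suc n)\<bar> \<le> g j" for j
  proof -
    have "\<bar>d (j + Suc n)\<bar> \<le> K * real (j + Suc n) * q ^ (j + Suc n)" by (rule bd)
    also have "\<dots> \<le> K * ((real n + 1) * (real j + 1)) * q ^ (j + Suc n)"
      using q K by (intro mult_right_mono mult_left_mono) (auto simp: algebra_simps)
    also have "\<dots> = g j" by (simp add: g_def power_add algebra_simps)
    finally show ?thesis .
  qed
  have "(\<Sum>j. d (j + Suc n)) \<le> suminf g"
    using gb sd' sgg by (intro suminf_le) (auto simp: abs_le_iff)
  moreover have "- suminf g \<le> (\<Sum>j. d (j + Suc n))"
  proof -
    have "(\<Sum>j. - g j) \<le> (\<Sum>j. d (j + Suc n))"
      using gb sd' sgg by (intro suminf_le) (auto simp: abs_le_iff summable_minus intro: minus_le_iff[THEN iffD1])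
    then show ?thesis by (simp add: suminf_minus[OF sgg])
  qed
  moreover have "suminf g = K * (real n + 1) * q ^ (n + 1) * (\<Sum>j. (real j + 1) * q ^ j)"
    unfolding g_def using sq by (intro suminf_mult) simp
  ultimately have "\<bar>suminf d\<bar> \<le> K * (real n + 1) * q ^ (n + 1) * (\<Sum>j. (real j + 1) * q ^ j)"
    unfolding eq by linarith
  then show ?thesis using \<open>summable d\<close> by blast
qed



definition sterm :: "real \<Rightarrow> real \<Rightarrow> nat \<Rightarrow> real \<Rightarrow> real" where
  "sterm b c m z = (if m = 0 then 0 else
     beta_digit b m z / b ^ m * (real m - c * (\<Sum>i=1..m-1. beta_digit b i z)))"

lemma sterm_bound:
  assumes "1 < b" "b \<le> 2" "0 \<le> z" "z \<le> 1"
  shows "\<bar>sterm b c m z\<bar> \<le> (2 * (1 + 2 * \<bar>c\<bar>)) * real m * (1 / b) ^ m"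
proof (cases "m = 0")
  case True then show ?thesis by (simp add: sterm_def)
next
  case False
  define S where "S = (\<Sum>i=1..m-1. beta_digit b i z)"
  have S0: "0 \<le> S" unfolding S_def using digit_bounds[OF assms] by (intro sum_nonneg) auto
  have "S \<le> real (card {1..m-1}) * 2" unfolding S_def using digit_bounds[OF assms]
    by (intro sum_bounded_above) auto
  then have S2: "S \<le> 2 * real m" using False by simp
  have g: "0 \<le> beta_digit b m z" "beta_digit b m z \<le> 2" using digit_bounds[OF assms] by auto
  have "\<bar>real m - c * S\<bar> \<le> \<bar>real m\<bar> + \<bar>c * S\<bar>" by (rule abs_triangle_ineq4)
  also have "\<dots> = real m + \<bar>c\<bar> * S" using S0 by (simp add: abs_mult)
  also have "\<dots> \<le> real m + \<bar>c\<bar> * (2 * real m)" using S2 by (simp add: mult_left_mono)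
  also have "\<dots> = real m * (1 + 2 * \<bar>c\<bar>)" by (simp add: algebra_simps)
  finally have h: "\<bar>real m - c * S\<bar> \<le> real m * (1 + 2 * \<bar>c\<bar>)" .
  have "\<bar>sterm b c m z\<bar> = beta_digit b m z * (1 / b) ^ m * \<bar>real m - c * S\<bar>"
    using False g assms by (simp add: sterm_def S_def abs_mult power_one_over)
  also have "\<dots> \<le> 2 * (1 / b) ^ m * (real m * (1 + 2 * \<bar>c\<bar>))"
    using g h assms by (intro mult_mono) auto
  finally show ?thesis by (simp add: algebra_simps)
qed

lemma sterm_summable_bound:
  assumes "1 < b" "b \<le> 2" "0 \<le> z" "z \<le> 1"
  shows "summable (\<lambda>m. sterm b c m z)"
proof -
  have "summable (\<lambda>m. sterm b c m z) \<and> \<bar>suminf (\<lambda>m. sterm b c m z)\<bar> \<le>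
     (2 * (1 + 2 * \<bar>c\<bar>)) * (real 0 + 1) * (1/b) ^ (0 + 1) * (\<Sum>j. (real j + 1) * (1/b) ^ j)"
    using assms by (intro tail_bound sterm_bound) (auto simp: sterm_def)
  then show ?thesis by blast
qed

lemma G_suminf:
  assumes "1 < b" "b \<le> 2" "0 \<le> z" "z \<le> 1"
  shows "G_beta b z = suminf (\<lambda>m. sterm b (1 / M_beta b) m z)"
proof -
  let ?s = "\<lambda>m. sterm b (1 / M_beta b) m z"
  have sm: "summable ?s" by (rule sterm_summable_bound[OF assms])
  have "suminf ?s = (\<Sum>k. ?s (k + 2)) + (\<Sum>i<2. ?s i)"
    by (rule suminf_split_initial_segment[OF sm])
  also have "(\<Sum>i<2. ?s i) = beta_digit b 1 z / b" by (simp add: sterm_def numeral_2_eq_2)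
  also have "(\<lambda>k. ?s (k + 2)) = (\<lambda>k. let n = k + 2 in
        beta_digit b n z / b ^ n *
          (real n - (1 / M_beta b) * (\<Sum>i=1..n-1. beta_digit b i z)))"
    by (auto simp: sterm_def Let_def)
  finally show ?thesis unfolding G_beta_def by simp
qed

lemma G_diff:
  assumes "1 < b" "b \<le> 2" "0 \<le> x" "x \<le> 1" "0 \<le> y" "y \<le> 1"
    and agree: "\<And>k. 1 \<le> k \<Longrightarrow> k \<le> n \<Longrightarrow> beta_digit b k y = beta_digit b k x"
  shows "\<bar>G_beta b y - G_beta b x\<bar> \<le> (4 * (1 + 2 * \<bar>1 / M_beta b\<bar>)) * (real n + 1) * (1/b) ^ (n + 1)
            * (\<Sum>j. (real j + 1) * (1/b) ^ j)"
proof -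
  define c where "c = 1 / M_beta b"
  define d where "d m = sterm b c m y - sterm b c m x" for m
  have sy: "summable (\<lambda>m. sterm b c m y)" by (rule sterm_summable_bound) (use assms in auto)
  have sx: "summable (\<lambda>m. sterm b c m x)" by (rule sterm_summable_bound) (use assms in auto)
  have eq: "G_beta b y - G_beta b x = suminf d"
    unfolding d_def G_suminf[OF assms(1,2,5,6)] G_suminf[OF assms(1-4)] c_def[symmetric]
    by (rule suminf_diff[OF sy sx])
  have bd: "\<bar>d m\<bar> \<le> (4 * (1 + 2 * \<bar>c\<bar>)) * real m * (1 / b) ^ m" for m
    using sterm_bound[OF assms(1-4), of c m] sterm_bound[OF assms(1,2,5,6), of c m]
    unfolding d_def by linarith
  have z: "d m = 0" if "m \<le> n" for m
  proof -
    have "(\<Sum>i=1..m-1. beta_digit b i y) = (\<Sum>i=1..m-1. beta_digit b i x)"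
      using that by (intro sum.cong) (auto intro: agree)
    moreover have "m \<noteq> 0 \<Longrightarrow> beta_digit b m y = beta_digit b m x" using that agree by auto
    ultimately show ?thesis unfolding d_def sterm_def by auto
  qed
  have "summable d \<and> \<bar>suminf d\<bar> \<le> (4 * (1 + 2 * \<bar>c\<bar>)) * (real n + 1) * (1/b) ^ (n + 1) * (\<Sum>j. (real j + 1) * (1/b) ^ j)"
    using assms by (intro tail_bound bd z) auto
  then show ?thesis unfolding eq c_def by blast
qed



lemma beta_map_measurable[measurable]: "beta_map b \<in> borel_measurable borel"
  unfolding beta_map_def by measurable

lemma iter_measurable[measurable]: "(beta_map b ^^ n) \<in> borel_measurable borel"
proof (induction n)
  case 0 then show ?case by simp
next
  case (Suc n)
  have "(beta_map b ^^ Suc n) = (beta_map b ^^ n) \<circ> beta_map b" by (rule funpow_Suc_right)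
  show ?case unfolding \<open>(beta_map b ^^ Suc n) = _\<close> by (rule measurable_comp[OF beta_map_measurable Suc.IH])
qed

lemma vimage_affine_borel:
  fixes c t :: real
  assumes S[measurable]: "S \<in> sets borel"
  shows "(\<lambda>x. t + c * x) -` S \<in> sets borel"
  using measurable_sets_borel[of "\<lambda>x::real. t + c * x" borel S] by measurable

lemma affine_preimage:
  fixes c t :: real
  assumes c: "0 < c" and S[measurable]: "S \<in> sets borel"
  shows "emeasure lborel S = ennreal c * emeasure lborel ((\<lambda>x. t + c * x) -` S)"
proof -
  have m: "(\<lambda>x. t + c * x) -` S \<in> sets borel"
    using measurable_sets_borel[of "\<lambda>x::real. t + c * x" borel S] by measurable
  have "emeasure lborel S = (\<integral>\<^sup>+x. indicator S x \<partial>lborel)" by simp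
  also have "\<dots> = ennreal \<bar>c\<bar> * (\<integral>\<^sup>+x. indicator S (t + c * x) \<partial>lborel)"
    by (rule nn_integral_real_affine) (use c in auto)
  also have "(\<integral>\<^sup>+x. indicator S (t + c * x) \<partial>lborel) = (\<integral>\<^sup>+x. indicator ((\<lambda>x. t + c * x) -` S) x \<partial>lborel)"
    by (simp add: indicator_vimage)
  also have "\<dots> = emeasure lborel ((\<lambda>x. t + c * x) -` S)" using m by simp
  finally show ?thesis using c by simp
qed

lemma ennreal_div_bound:
  fixes X L :: ennreal
  assumes "0 < b" "0 \<le> K" "ennreal b * X \<le> ennreal K * L"
  shows "X \<le> ennreal (K / b) * L"
proof -
  have "X = ennreal (1 / b) * (ennreal b * X)"
    using assms by (simp add: mult.assoc[symmetric] ennreal_mult[symmetric])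
  also have "\<dots> \<le> ennreal (1 / b) * (ennreal K * L)" using assms(3) by (rule mult_left_mono) simp
  also have "\<dots> = ennreal (K / b) * L"
    using assms by (simp add: mult.assoc[symmetric] ennreal_mult[symmetric])
  finally show ?thesis .
qed

lemma preim_count:
  assumes b: "1 < b" "b \<le> 2" and E[measurable]: "E \<in> sets borel"
  shows "0 \<le> a \<Longrightarrow> a \<le> 1 \<Longrightarrow>
    emeasure lborel {x \<in> {0..<a}. (beta_map b ^^ n) x \<in> E} \<le> ennreal (2 * real n * a + 1) * emeasure lborel E"
proof (induction n arbitrary: a)
  case 0
  have "emeasure lborel {x \<in> {0..<a}. (beta_map b ^^ 0) x \<in> E} \<le> emeasure lborel E"
    by (intro emeasure_mono) auto
  then show ?case by simp
next
  case (Suc n)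
  let ?L = "emeasure lborel E"
  let ?P = "\<lambda>n a. {x \<in> {0..<a}. (beta_map b ^^ n) x \<in> E}"
  have Pm[measurable]: "?P n a \<in> sets borel" for n a by measurable
  have it: "(beta_map b ^^ Suc n) x = (beta_map b ^^ n) (beta_map b x)" for x
    by (simp only: funpow_Suc_right comp_apply)
  show ?case
  proof (cases "a \<le> 1 / b")
    case True
    have ba: "0 \<le> b * a" "b * a \<le> 1" using True Suc.prems b by (auto simp: field_simps)
    have sub: "?P (Suc n) a \<subseteq> (\<lambda>x. 0 + b * x) -` ?P n (b * a)"
    proof
      fix x assume x: "x \<in> ?P (Suc n) a"
      then have "0 \<le> b * x" "b * x < b * a" using b by auto
      then have "beta_map b x = b * x" using ba unfolding beta_map_def by (simp add: floor_eq_iff)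
      then show "x \<in> (\<lambda>x. 0 + b * x) -` ?P n (b * a)" using x it[of x] \<open>0 \<le> b * x\<close> \<open>b * x < b * a\<close> by auto
    qed
    have "ennreal b * emeasure lborel ((\<lambda>x. 0 + b * x) -` ?P n (b * a)) = emeasure lborel (?P n (b * a))"
      using affine_preimage[of b "?P n (b * a)" 0] b by simp
    also have "\<dots> \<le> ennreal (2 * real n * (b * a) + 1) * ?L" using Suc.IH ba by blast
    finally have "emeasure lborel ((\<lambda>x. 0 + b * x) -` ?P n (b * a)) \<le> ennreal ((2 * real n * (b * a) + 1) / b) * ?L"
      using b ba by (intro ennreal_div_bound) auto
    also have "\<dots> \<le> ennreal (2 * real (Suc n) * a + 1) * ?L"
    proof (intro mult_right_mono ennreal_leI)
      have "(2 * real n * (b * a) + 1) / b = 2 * real n * a + 1 / b" using b by (simp add: field_simps)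
      also have "\<dots> \<le> 2 * real (Suc n) * a + 1" proof -
        have "0 \<le> a * (b * 2)" using b Suc.prems by simp
        then show ?thesis using b by (simp add: field_simps)
      qed
      finally show "(2 * real n * (b * a) + 1) / b \<le> 2 * real (Suc n) * a + 1" .
    qed simp
    finally have fin: "emeasure lborel ((\<lambda>x. 0 + b * x) -` ?P n (b * a)) \<le> ennreal (2 * real (Suc n) * a + 1) * ?L" .
    have "(\<lambda>x. 0 + b * x) -` ?P n (b * a) \<in> sets borel" by (rule vimage_affine_borel) measurable
    then have "(\<lambda>x. 0 + b * x) -` ?P n (b * a) \<in> sets lborel" by simp
    from emeasure_mono[OF sub this] fin show ?thesis by (rule order_trans)
  next
    case False
    have ba1: "1 < b * a" using False b by (simp add: field_simps)
    have "b * a \<le> b * 1" using Suc.prems b by (intro mult_left_mono) auto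
    then have ba2: "b * a \<le> 2" using b by linarith
    have ba: "0 \<le> b * a - 1" "b * a - 1 \<le> 1" using ba1 ba2 by auto
    define pre1 where "pre1 = (\<lambda>x. 0 + b * x) -` ?P n 1"
    define pre2 where "pre2 = (\<lambda>x. (-1) + b * x) -` ?P n (b * a - 1)"
    have sub: "?P (Suc n) a \<subseteq> pre1 \<union> pre2"
    proof
      fix x assume x: "x \<in> ?P (Suc n) a"
      show "x \<in> pre1 \<union> pre2"
      proof (cases "b * x < 1")
        case True
        then have "beta_map b x = b * x" using x b unfolding beta_map_def by (simp add: floor_eq_iff)
        then show ?thesis using x it[of x] True b unfolding pre1_def by auto
      next
        case False
        have "b * x < b * a" using x b by auto
        moreover note ba2
        ultimately have "\<lfloor>b * x\<rfloor> = 1" using False by (simp add: floor_eq_iff)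
        then have "beta_map b x = b * x - 1" unfolding beta_map_def by simp
        then show ?thesis using x it[of x] False \<open>b * x < b * a\<close> unfolding pre2_def by auto
      qed
    qed
    have "ennreal b * emeasure lborel pre1 = emeasure lborel (?P n 1)"
      using affine_preimage[of b "?P n 1" 0] b unfolding pre1_def by simp
    also have "\<dots> \<le> ennreal (2 * real n * 1 + 1) * ?L" using Suc.IH[of 1] by simp
    finally have e1: "emeasure lborel pre1 \<le> ennreal ((2 * real n * 1 + 1) / b) * ?L"
      using b by (intro ennreal_div_bound) auto
    have "ennreal b * emeasure lborel pre2 = emeasure lborel (?P n (b * a - 1))"
      using affine_preimage[of b "?P n (b * a - 1)" "-1"] b unfolding pre2_def by simp
    also have "\<dots> \<le> ennreal (2 * real n * (b * a - 1) + 1) * ?L" using Suc.IH ba by blast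
    finally have e2: "emeasure lborel pre2 \<le> ennreal ((2 * real n * (b * a - 1) + 1) / b) * ?L"
      using b ba by (intro ennreal_div_bound) auto
    have p1m: "pre1 \<in> sets borel" unfolding pre1_def by (rule vimage_affine_borel) measurable
    have p2m: "pre2 \<in> sets borel" unfolding pre2_def by (rule vimage_affine_borel) measurable
    have "emeasure lborel (?P (Suc n) a) \<le> emeasure lborel (pre1 \<union> pre2)" by (rule emeasure_mono[OF sub]) (use p1m p2m in auto)
    also have "\<dots> \<le> emeasure lborel pre1 + emeasure lborel pre2"
      by (rule emeasure_subadditive) (use p1m p2m in auto)
    also have "\<dots> \<le> ennreal ((2 * real n * 1 + 1) / b) * ?L + ennreal ((2 * real n * (b * a - 1) + 1) / b) * ?L"
      using e1 e2 by (rule add_mono)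
    also have "\<dots> = ennreal ((2 * real n * 1 + 1) / b + (2 * real n * (b * a - 1) + 1) / b) * ?L"
      using b ba by (simp add: distrib_right)
    also have "\<dots> \<le> ennreal (2 * real (Suc n) * a + 1) * ?L"
    proof (intro mult_right_mono ennreal_leI)
      have "(2 * real n * 1 + 1) / b + (2 * real n * (b * a - 1) + 1) / b = 2 * real n * a + 2 / b"
        using b by (simp add: field_simps)
      also have "\<dots> \<le> 2 * real (Suc n) * a + 1" using b False by (simp add: field_simps)
      finally show "(2 * real n * 1 + 1) / b + (2 * real n * (b * a - 1) + 1) / b \<le> 2 * real (Suc n) * a + 1" .
    qed simp
    finally show ?thesis .
  qed
qed



lemma dint_measurable[measurable]: "dint \<in> borel_measurable borel"
  unfolding dint_def by measurable

lemma E_measure: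
  assumes b: "1 < b" "b \<le> 2" and d: "0 \<le> \<delta>"
  shows "emeasure lborel {z \<in> {0..<1}. dint (b * z) < \<delta>} \<le> ennreal (6 * \<delta>)"
proof -
  define I where "I k = {(real k - \<delta>) / b <..< (real k + \<delta>) / b}" for k :: nat
  have sub: "{z \<in> {0..<1}. dint (b * z) < \<delta>} \<subseteq> I 0 \<union> I 1 \<union> I 2"
  proof
    fix z assume z: "z \<in> {z \<in> {0..<1}. dint (b * z) < \<delta>}"
    have u0: "0 \<le> b * z" using z b by auto
    have "b * z < b * 1" using z b by (intro mult_strict_left_mono) auto
    then have u2: "b * z < 2" using b by linarith
    define fl where "fl = \<lfloor>b * z\<rfloor>"
    have f0: "0 \<le> fl" using u0 unfolding fl_def by simp
    have f1: "fl \<le> 1" using u2 unfolding fl_def by (simp add: floor_le_iff)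
    have lo: "of_int fl \<le> b * z" unfolding fl_def by simp
    have hi: "b * z < of_int fl + 1" unfolding fl_def by simp
    have dd: "dint (b * z) = min (b * z - of_int fl) (of_int fl + 1 - b * z)"
      unfolding dint_def fl_def ..
    have near: "\<exists>k::nat. k \<le> 2 \<and> \<bar>b * z - real k\<bar> < \<delta>"
    proof (cases "b * z - of_int fl < \<delta>")
      case True
      then show ?thesis using f0 f1 lo
        by (intro exI[of _ "nat fl"]) auto
    next
      case False
      then have "of_int fl + 1 - b * z < \<delta>" using z dd by auto
      then show ?thesis using f0 f1 hi
        by (intro exI[of _ "nat (fl + 1)"]) auto
    qed
    then obtain k :: nat where k: "k \<le> 2" "\<bar>b * z - real k\<bar> < \<delta>" by blast
    then have "z \<in> I k" unfolding I_def using b by (auto simp: field_simps abs_less_iff)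
    moreover have "k = 0 \<or> k = 1 \<or> k = 2" using k by auto
    ultimately show "z \<in> I 0 \<union> I 1 \<union> I 2" by auto
  qed
  have mI: "emeasure lborel (I k) \<le> ennreal (2 * \<delta>)" for k
  proof -
    have "emeasure lborel (I k) = ennreal ((real k + \<delta>) / b - (real k - \<delta>) / b)"
      unfolding I_def using b d by (intro emeasure_lborel_Ioo) (simp add: divide_right_mono)
    also have "(real k + \<delta>) / b - (real k - \<delta>) / b = 2 * \<delta> / b" using b by (simp add: field_simps)
    also have "2 * \<delta> / b \<le> 2 * \<delta>" using b d by (simp add: field_simps mult_le_cancel_left1)
    finally show ?thesis by (simp add: ennreal_leI)
  qed
  have mIm: "I k \<in> sets borel" for k unfolding I_def by simp
  have mU: "I 0 \<union> I 1 \<union> I 2 \<in> sets borel" "I 0 \<union> I 1 \<in> sets borel" using mIm[of 0] mIm[of 1] mIm[of 2] by auto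
  have "emeasure lborel {z \<in> {0..<1}. dint (b * z) < \<delta>} \<le> emeasure lborel (I 0 \<union> I 1 \<union> I 2)"
    by (rule emeasure_mono[OF sub]) (simp only: sets_lborel mU)
  also have "\<dots> \<le> emeasure lborel (I 0 \<union> I 1) + emeasure lborel (I 2)"
    by (rule emeasure_subadditive) (simp_all only: sets_lborel mU mIm)
  also have "\<dots> \<le> (emeasure lborel (I 0) + emeasure lborel (I 1)) + emeasure lborel (I 2)"
    by (intro add_mono emeasure_subadditive) (simp_all only: sets_lborel mU mIm order_refl)
  also have "\<dots> \<le> (ennreal (2 * \<delta>) + ennreal (2 * \<delta>)) + ennreal (2 * \<delta>)"
    by (intro add_mono mI)
  also have "\<dots> = ennreal (6 * \<delta>)" using d by (simp add: ennreal_plus[symmetric] del: ennreal_plus)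
  finally show ?thesis .
qed

lemma iter_lt1:
  assumes "0 < b" "0 \<le> x" "x < 1"
  shows "(beta_map b ^^ i) x < 1"
proof (cases i)
  case 0 then show ?thesis using assms by simp
next
  case (Suc m) then show ?thesis using beta_map_range[OF assms(1)] by simp
qed

lemma bad_measure:
  assumes b: "1 < b" "b \<le> 2" and d: "0 \<le> \<delta>"
  shows "emeasure lborel {x \<in> {0..<1}. dint (b * (beta_map b ^^ i) x) < \<delta>} \<le> ennreal ((2 * real i + 1) * (6 * \<delta>))"
proof -
  let ?E = "{z \<in> {0..<1}. dint (b * z) < \<delta>}"
  have Em: "?E \<in> sets borel" by measurable
  have "{x \<in> {0..<1}. dint (b * (beta_map b ^^ i) x) < \<delta>} = {x \<in> {0..<1}. (beta_map b ^^ i) x \<in> ?E}"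
    using iter_range[of b] iter_lt1[of b] b by auto
  also have "emeasure lborel \<dots> \<le> ennreal (2 * real i * 1 + 1) * emeasure lborel ?E"
    by (rule preim_count[OF b Em]) auto
  also have "\<dots> \<le> ennreal (2 * real i * 1 + 1) * ennreal (6 * \<delta>)"
    by (intro mult_left_mono E_measure b d) simp
  also have "\<dots> = ennreal ((2 * real i + 1) * (6 * \<delta>))" using d by (simp add: ennreal_mult)
  finally show ?thesis .
qed



lemma holder_at:
  assumes b: "1 < b" "b \<le> 2" and x: "0 \<le> x" "x \<le> 1"
    and c0: "0 < c0" "c0 \<le> 1"
    and good: "\<And>i. c0 / (real i + 1) ^ 3 \<le> dint (b * (beta_map b ^^ i) x)"
    and al: "0 < \<alpha>" "\<alpha> < 1"
  shows "\<exists>C>0. \<forall>y \<in> {0<..<1::real}. \<bar>G_beta b y - G_beta b x\<bar> \<le> C * \<bar>y - x\<bar> powr \<alpha>"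
proof -
  define q where "q = 1 / b"
  have q: "0 < q" "q < 1" using b by (auto simp: q_def)
  define A where "A = 4 * (1 + 2 * \<bar>1 / M_beta b\<bar>)"
  define Q where "Q = (\<Sum>j. (real j + 1) * q ^ j)"
  have A0: "0 \<le> A" unfolding A_def by simp
  have Q0: "0 \<le> Q" unfolding Q_def using poly_geom_summable[OF q, of 1] q
    by (intro suminf_nonneg) auto
  define \<rho> where "\<rho> = q powr (1 - \<alpha>)"
  have \<rho>: "0 < \<rho>" "\<rho> < 1" using q al powr_less_mono2[of "1 - \<alpha>" q 1] by (auto simp: \<rho>_def)
  obtain B where B: "\<And>m. (real m + 1) ^ 4 * \<rho> ^ m \<le> B" using poly_geom_bounded[OF \<rho>, of 4] by blast
  define C where "C = A * Q * B / c0 + 1"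
  have B0: "0 \<le> B" using B[of 0] by simp
  have "0 \<le> A * Q * B / c0" using A0 Q0 B0 c0 by simp
  then have C0: "0 < C" unfolding C_def by linarith
  have main: "\<bar>G_beta b y - G_beta b x\<bar> \<le> C * \<bar>y - x\<bar> powr \<alpha>" if y: "y \<in> {0<..<1::real}" for y
  proof (cases "y = x")
    case True then show ?thesis using C0 by simp
  next
    case False
    define r where "r = \<bar>y - x\<bar>"
    have r0: "0 < r" using False by (simp add: r_def)
    define P where "P i \<longleftrightarrow> dint (b * (beta_map b ^^ i) x) \<le> b ^ (i + 1) * r" for i
    obtain n0 where n0: "1 / r < b ^ n0" using real_arch_pow[OF b(1)] by blast
    have "P n0"
    proof -
      have "1 < b ^ n0 * r" using n0 r0 by (simp add: field_simps)
      also have "b ^ n0 * r \<le> b ^ (n0 + 1) * r" using b r0 by (intro mult_right_mono) auto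
      finally have "1 < b ^ (n0 + 1) * r" .
      then show ?thesis unfolding P_def using dint_le1[of "b * (beta_map b ^^ n0) x"] by linarith
    qed
    define n where "n = (LEAST i. P i)"
    have Pn: "P n" unfolding n_def by (rule LeastI[of P, OF \<open>P n0\<close>])
    have notP: "\<not> P j" if "j < n" for j using not_less_Least[of j P] that unfolding n_def by blast
    have sh: "\<forall>j<n. b ^ (j+1) * \<bar>y - x\<bar> < dint (b * (beta_map b ^^ j) x)"
      using notP unfolding P_def r_def by (auto simp: not_le)
    have fl: "\<forall>j<n. \<lfloor>b * (beta_map b ^^ j) y\<rfloor> = \<lfloor>b * (beta_map b ^^ j) x\<rfloor>"
      using orbit_shadow[OF sh] b by auto
    have agree: "beta_digit b k y = beta_digit b k x" if "1 \<le> k" "k \<le> n" for k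
      unfolding beta_digit_def using fl that by (metis diff_less less_le_trans less_numeral_extra(1))
    have Gd: "\<bar>G_beta b y - G_beta b x\<bar> \<le> A * (real n + 1) * q ^ (n + 1) * Q"
      unfolding A_def Q_def q_def using G_diff[OF b x, of y n] y agree by auto
    define u where "u = c0 / (real n + 1) ^ 3"
    have u: "0 < u" "u \<le> 1" using c0 by (auto simp: u_def field_simps intro: order_trans[OF c0(2)])
    define w where "w = q ^ (n + 1)"
    have w0: "0 < w" using q by (simp add: w_def)
    have "u \<le> b ^ (n + 1) * r" using good[of n] Pn unfolding P_def u_def by linarith
    then have ur: "u * w \<le> r" unfolding w_def q_def using b by (simp add: field_simps power_divide)
    have wsplit: "w = w powr \<alpha> * \<rho> ^ (n + 1)"
    proof -
      have "w powr (1 - \<alpha>) = (q powr real (n + 1)) powr (1 - \<alpha>)"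
        unfolding w_def using powr_realpow[OF q(1), of "n+1"] by simp
      also have "\<dots> = q powr (real (n + 1) * (1 - \<alpha>))" by (rule powr_powr)
      also have "\<dots> = (q powr (1 - \<alpha>)) powr real (n + 1)" by (simp add: powr_powr mult.commute)
      also have "\<dots> = \<rho> ^ (n + 1)" unfolding \<rho>_def using q by (intro powr_realpow) simp
      finally have "w powr (1 - \<alpha>) = \<rho> ^ (n + 1)" .
      moreover have "w = w powr \<alpha> * w powr (1 - \<alpha>)" using w0 by (simp add: powr_add[symmetric])
      ultimately show ?thesis by simp
    qed
    have Bn: "(real n + 1) * \<rho> ^ (n + 1) \<le> B / (real n + 1) ^ 3"
    proof -
      have "(real n + 1) ^ 4 * \<rho> ^ (n + 1) \<le> (real n + 1) ^ 4 * \<rho> ^ n"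
        using \<rho> by (intro mult_left_mono power_decreasing) auto
      also have "\<dots> \<le> B" by (rule B)
      finally have X: "(real n + 1) ^ 4 * \<rho> ^ (n + 1) \<le> B" .
      have e: "(real n + 1) ^ 4 = (real n + 1) ^ 3 * (real n + 1)" by (simp add: eval_nat_numeral)
      have pos: "0 < (real n + 1) ^ 3" by simp
      show ?thesis unfolding pos_le_divide_eq[OF pos] using X e by (simp add: algebra_simps)
    qed
    have Gd': "\<bar>G_beta b y - G_beta b x\<bar> \<le> A * (real n + 1) * w * Q" using Gd unfolding w_def .
    define v where "v = w powr \<alpha>"
    have ws: "w = v * \<rho> ^ (n + 1)" using wsplit unfolding v_def .
    have "\<bar>G_beta b y - G_beta b x\<bar> \<le> A * Q * ((real n + 1) * \<rho> ^ (n + 1)) * w powr \<alpha>"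
      using Gd' unfolding v_def[symmetric] unfolding ws by (simp add: algebra_simps)
    also have "\<dots> \<le> A * Q * (B / (real n + 1) ^ 3) * w powr \<alpha>"
      using A0 Q0 Bn by (intro mult_right_mono mult_left_mono) auto
    also have "\<dots> = (A * Q * B / c0) * (u * w powr \<alpha>)" using c0 by (simp add: u_def field_simps)
    also have "\<dots> \<le> C * (u * w powr \<alpha>)"
      unfolding C_def using u by (intro mult_right_mono) auto
    also have "u * w powr \<alpha> \<le> (u * w) powr \<alpha>"
    proof -
      have "u powr 1 \<le> u powr \<alpha>" using u al by (intro powr_mono') auto
      then have "u \<le> u powr \<alpha>" using u by simp
      then show ?thesis by (simp add: powr_mult u(1) w0 less_imp_le mult_right_mono)
    qed
    also have "(u * w) powr \<alpha> \<le> r powr \<alpha>" using ur u w0 al by (intro powr_mono2) auto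
    finally show ?thesis unfolding r_def using C0 by (simp add: mult_left_mono)
  qed
  show ?thesis using C0 main by blast
qed



lemma getc:
  fixes D :: "nat \<Rightarrow> real"
  assumes "\<And>i. 0 < D i"
  shows "\<exists>c>0. c \<le> 1 \<and> (\<forall>i<N. c / (real i + 1) ^ 3 \<le> D i)"
proof (induction N)
  case 0 then show ?case by (intro exI[of _ 1]) auto
next
  case (Suc N)
  then obtain c where c: "0 < c" "c \<le> 1" "\<forall>i<N. c / (real i + 1) ^ 3 \<le> D i" by blast
  define c' where "c' = min c (D N * (real N + 1) ^ 3)"
  have c'0: "0 < c'" using c assms[of N] by (simp add: c'_def)
  have "c' / (real i + 1) ^ 3 \<le> D i" if "i < Suc N" for i
  proof (cases "i < N")
    case True
    have "c' / (real i + 1) ^ 3 \<le> c / (real i + 1) ^ 3" by (intro divide_right_mono) (auto simp: c'_def)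
    then show ?thesis using c True by force
  next
    case False
    then have "i = N" using that by simp
    have "c' \<le> D N * (real N + 1) ^ 3" by (simp add: c'_def)
    then show ?thesis using \<open>i = N\<close> by (simp add: pos_divide_le_eq)
  qed
  moreover have "c' \<le> 1" using c by (simp add: c'_def)
  ultimately show ?case using c'0 by blast
qed

lemma summable_inv_sq: "summable (\<lambda>i. 12 * inverse ((real i + 1) ^ 2))"
proof -
  have "summable (\<lambda>n. inverse (of_nat n ^ 2 :: real))" by (rule inverse_power_summable) simp
  then have "summable (\<lambda>n. inverse (of_nat (n + 1) ^ 2 :: real))" by (rule summable_ignore_initial_segment)
  then show ?thesis by (intro summable_mult) (simp add: add.commute)
qed

theorem theorem3p3:
  fixes \<beta> :: real
  assumes "1 < \<beta>" and "\<beta> \<le> 2"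
  shows "\<exists>F \<subseteq> {0..1}. {0..1} - F \<in> null_sets lebesgue \<and>
    (\<forall>x \<in> F. \<forall>\<alpha> \<in> {0<..<1::real}. \<exists>C > 0. \<forall>y \<in> {0<..<1::real}.
        \<bar>G_beta \<beta> y - G_beta \<beta> x\<bar> \<le> C * \<bar>y - x\<bar> powr \<alpha>)"
proof -
  note b = assms
  define D where "D i x = dint (\<beta> * (beta_map \<beta> ^^ i) x)" for i x
  define A where "A i = {x \<in> {0..<1}. D i x < 1 / (real i + 1) ^ 3}" for i
  define Z where "Z i = {x \<in> {0..<1}. D i x \<le> 0}" for i
  define F where "F = {0..<1::real} - (limsup A \<union> (\<Union>i. Z i))"
  have Am[measurable]: "A i \<in> sets lborel" for i unfolding A_def D_def by measurable
  have Zm[measurable]: "Z i \<in> sets lborel" for i unfolding Z_def D_def by measurable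
  have Ae: "emeasure lborel (A i) \<le> ennreal ((2 * real i + 1) * (6 * (1 / (real i + 1) ^ 3)))" for i
    unfolding A_def D_def by (rule bad_measure[OF b]) simp
  have Afin: "emeasure lborel (A i) < \<infinity>" for i using Ae[of i] by (simp add: le_less_trans)
  have Ameas: "measure lborel (A i) \<le> 12 * inverse ((real i + 1) ^ 2)" for i
  proof -
    have "measure lborel (A i) \<le> enn2real (ennreal ((2 * real i + 1) * (6 * (1 / (real i + 1) ^ 3))))"
      unfolding measure_def by (rule enn2real_mono[OF Ae]) simp
    also have "\<dots> = (2 * real i + 1) * (6 * (1 / (real i + 1) ^ 3))" by simp
    also have "\<dots> \<le> (2 * (real i + 1)) * (6 * (1 / (real i + 1) ^ 3))"
      by (intro mult_right_mono) auto
    also have "\<dots> = 12 * inverse ((real i + 1) ^ 2)"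
    proof -
      have eq: "\<And>t::real. 0 < t \<Longrightarrow> (2 * t) * (6 * (1 / t ^ 3)) = 12 * inverse (t ^ 2)"
        by (simp add: field_simps power3_eq_cube power2_eq_square)
      show ?thesis by (rule eq) simp
    qed
    finally show ?thesis .
  qed
  have sA: "summable (\<lambda>i. measure lborel (A i))"
    by (rule summable_comparison_test'[OF summable_inv_sq, where N=0]) (use Ameas in auto)
  have nA: "limsup A \<in> null_sets lborel"
    by (rule borel_cantelli_limsup1) (use Am Afin sA in auto)
  have nZ: "Z i \<in> null_sets lborel" for i
  proof -
    have "emeasure lborel (Z i) \<le> 0"
    proof (rule ennreal_le_epsilon)
      fix e :: real assume e: "0 < e"
      define \<delta> where "\<delta> = e / (6 * (2 * real i + 1))"
      have d0: "0 < \<delta>" using e by (simp add: \<delta>_def)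
      have "Z i \<subseteq> {x \<in> {0..<1}. dint (\<beta> * (beta_map \<beta> ^^ i) x) < \<delta>}"
        using d0 unfolding Z_def D_def by auto
      then have "emeasure lborel (Z i) \<le> emeasure lborel {x \<in> {0..<1}. dint (\<beta> * (beta_map \<beta> ^^ i) x) < \<delta>}"
        by (rule emeasure_mono) measurable
      also have "\<dots> \<le> ennreal ((2 * real i + 1) * (6 * \<delta>))" by (rule bad_measure[OF b]) (use d0 in simp)
      also have "(2 * real i + 1) * (6 * \<delta>) = e" unfolding \<delta>_def by (simp add: field_simps)
      finally show "emeasure lborel (Z i) \<le> 0 + ennreal e" by simp
    qed
    then show ?thesis using Zm by (simp add: null_sets_def)
  qed
  have n1: "{1::real} \<in> null_sets lborel" by (rule finite_imp_null_set_lborel) simp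
  define N where "N = {1::real} \<union> limsup A \<union> (\<Union>i. Z i)"
  have nN: "N \<in> null_sets lborel" unfolding N_def using n1 nA nZ by (intro null_sets.Un null_sets_UN') auto
  have sub: "{0..1} - F \<subseteq> N" unfolding F_def N_def by auto
  have null: "{0..1} - F \<in> null_sets lebesgue"
    by (rule null_sets_completion_subset[OF sub null_sets_completionI[OF nN]])
  have hol: "\<forall>\<alpha> \<in> {0<..<1::real}. \<exists>C > 0. \<forall>y \<in> {0<..<1::real}.
        \<bar>G_beta \<beta> y - G_beta \<beta> x\<bar> \<le> C * \<bar>y - x\<bar> powr \<alpha>" if x: "x \<in> F" for x
  proof
    fix \<alpha> :: real assume al: "\<alpha> \<in> {0<..<1}"
    have x01: "0 \<le> x" "x < 1" using x by (auto simp: F_def)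
    have "x \<notin> limsup A" using x by (auto simp: F_def)
    then obtain M where M: "\<And>i. i \<ge> M \<Longrightarrow> x \<notin> A i" by (auto simp: limsup_INF_SUP)
    have Dpos: "0 < D i x" for i
    proof -
      have "\<not> D i x \<le> 0" using x by (auto simp: F_def Z_def)
      then show ?thesis by simp
    qed
    obtain c where c: "0 < c" "c \<le> 1" "\<forall>i<M. c / (real i + 1) ^ 3 \<le> D i x"
      using getc[of "\<lambda>i. D i x" M] Dpos by blast
    have good: "c / (real i + 1) ^ 3 \<le> dint (\<beta> * (beta_map \<beta> ^^ i) x)" for i
    proof (cases "i < M")
      case True then show ?thesis using c by (simp add: D_def)
    next
      case False
      then have "x \<notin> A i" using M by simp
      then have "1 / (real i + 1) ^ 3 \<le> D i x" using x01 by (auto simp: A_def)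
      moreover have "c / (real i + 1) ^ 3 \<le> 1 / (real i + 1) ^ 3" using c by (intro divide_right_mono) auto
      ultimately show ?thesis by (simp add: D_def)
    qed
    show "\<exists>C > 0. \<forall>y \<in> {0<..<1::real}. \<bar>G_beta \<beta> y - G_beta \<beta> x\<bar> \<le> C * \<bar>y - x\<bar> powr \<alpha>"
      using holder_at[OF b, of x c \<alpha>] x01 c good al by auto
  qed
  have "F \<subseteq> {0..1}" unfolding F_def by auto
  then show ?thesis using null hol by blast
qed


end
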